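(* As $r\to0$, $\zeta_0(r)=\frac2\pi+O(r^2)$ and $\zeta_2(r)=\frac2\pi+O(r^2)$. As $r\to\infty$, $\zeta_0(r)=\frac{A_0}{r}(1+O(1/r^2))$ and $\zeta_2(r)=\frac{A_2}{r^3}(1+O(1/r^2))$.
   Context: $\phi(t)=\frac{1}{\sqrt{2\pi}}e^{-t^2/2}$, $Q(x)=\int_x^\infty\phi(t)dt$, $\xi(s):=\frac{\phi^2(s)}{Q(s)(1-Q(s))}$, and $\zeta_k(t):=\mathbb{E}[S^k\xi(tS)]$ for $S\sim\mathcal{N}(0,1)$. $A_0:=\frac{1}{\sqrt{2\pi}}\int_{-\infty}^{\infty}\xi(u)du$ and $A_2:=\frac{1}{\sqrt{2\pi}}\int_{-\infty}^{\infty}\xi(u)u^2du$. *)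

theory Defs
  imports "HOL-Analysis.Analysis" "HOL-Library.Landau_Symbols"
begin

definition phi :: "real \<Rightarrow> real" where
  "phi t = exp (- (t^2) / 2) / sqrt (2 * pi)"

definition Q :: "real \<Rightarrow> real" where
  "Q x = (LINT t:{x..}|lborel. phi t)"

definition xi :: "real \<Rightarrow> real" where
  "xi s = (phi s)^2 / (Q s * (1 - Q s))"

definition zeta :: "nat \<Rightarrow> real \<Rightarrow> real" where
  "zeta k t = (LINT s|lborel. s ^ k * xi (t * s) * phi s)"

definition A0 :: real where
  "A0 = 1 / sqrt (2 * pi) * (LINT u|lborel. xi u)"

definition A2 :: real where
  "A2 = 1 / sqrt (2 * pi) * (LINT u|lborel. xi u * u^2)"

end

theory Submission
  imports Defs "HOL-Probability.Probability"
begin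


lemma phi_std: "phi = std_normal_density"
  by (rule ext) (simp add: phi_def std_normal_density_def)

lemma phi_integrable[simp]: "integrable lborel phi"
  by (simp add: phi_std)

lemma phi_int1: "(\<integral>t. phi t \<partial>lborel) = 1"
  by (simp add: phi_std)

lemma phi_meas[measurable]: "phi \<in> borel_measurable borel"
  by (simp add: phi_std)

lemma phi_pos: "0 < phi t"
  by (simp add: phi_def)

lemma phi_le: "phi t \<le> 1 / sqrt (2*pi)"
  by (simp add: phi_def divide_right_mono)

lemma phi_lower:
  assumes "t\<^sup>2 \<le> m" shows "exp (-m/2) / sqrt (2*pi) \<le> phi t"
  unfolding phi_def using assms by (intro divide_right_mono) auto

lemma phi_sq: "(phi t)\<^sup>2 = exp (- t\<^sup>2) / (2*pi)"
proof -
  have "(phi t)\<^sup>2 = (exp (- t\<^sup>2 / 2))\<^sup>2 / (sqrt (2*pi))\<^sup>2"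
    by (simp add: phi_def power_divide)
  also have "(exp (- t\<^sup>2 / 2))\<^sup>2 = exp (- t\<^sup>2)"
    by (simp add: power2_eq_square exp_add[symmetric])
  finally show ?thesis by simp
qed

lemma ind_phi_int[simp]: "A \<in> sets borel \<Longrightarrow> integrable lborel (\<lambda>t. indicator A t * phi t)"
  using integrable_mult_indicator[of A lborel phi] by simp

lemma ind_const_int[simp]: "integrable lborel (\<lambda>t::real. indicator {x..<y} t * (c::real))"
proof -
  have "{x..<y} = {x..} \<inter> {..<y}" by auto
  have m: "{x..<y} \<in> sets borel" by simp
  have "emeasure lborel {x..<y} < \<top>" by (cases "x \<le> y") auto
  then have "integrable lborel (indicat_real {x..<y})"
    using m by (intro integrable_real_indicator) auto
  then show ?thesis by (intro integrable_mult_left) simp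
qed

lemma Q_eq: "Q x = (\<integral>t. indicator {x..} t * phi t \<partial>lborel)"
  by (simp add: Q_def set_lebesgue_integral_def)

definition P :: "real \<Rightarrow> real" where "P x = (\<integral>t. indicator {..<x} t * phi t \<partial>lborel)"

lemma Q_P: "Q x + P x = 1"
proof -
  have "Q x + P x = (\<integral>t. indicator {x..} t * phi t + indicator {..<x} t * phi t \<partial>lborel)"
    unfolding Q_eq P_def by (rule Bochner_Integration.integral_add[symmetric]) simp_all
  also have "\<dots> = (\<integral>t. phi t \<partial>lborel)"
    by (intro Bochner_Integration.integral_cong) (auto simp: indicator_def)
  finally show ?thesis using phi_int1 by simp
qed

lemma Q_split: assumes "x \<le> y"
  shows "Q x = (\<integral>t. indicator {x..<y} t * phi t \<partial>lborel) + Q y"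
proof -
  have "(\<integral>t. indicator {x..<y} t * phi t \<partial>lborel) + Q y = (\<integral>t. indicator {x..<y} t * phi t + indicator {y..} t * phi t \<partial>lborel)"
    unfolding Q_eq by (rule Bochner_Integration.integral_add[symmetric]) simp_all
  also have "\<dots> = Q x" unfolding Q_eq
    using assms by (intro Bochner_Integration.integral_cong) (auto simp: indicator_def)
  finally show ?thesis by simp
qed

lemma P_split: assumes "x \<le> y"
  shows "P y = (\<integral>t. indicator {x..<y} t * phi t \<partial>lborel) + P x"
proof -
  have "(\<integral>t. indicator {x..<y} t * phi t \<partial>lborel) + P x = (\<integral>t. indicator {x..<y} t * phi t + indicator {..<x} t * phi t \<partial>lborel)"
    unfolding P_def by (rule Bochner_Integration.integral_add[symmetric]) simp_all
  also have "\<dots> = P y" unfolding P_def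
    using assms by (intro Bochner_Integration.integral_cong) (auto simp: indicator_def)
  finally show ?thesis by simp
qed

lemma seg_upper: assumes "x \<le> y"
  shows "(\<integral>t. indicator {x..<y} t * phi t \<partial>lborel) \<le> (y - x) / sqrt (2*pi)"
proof -
  have "(\<integral>t. indicator {x..<y} t * phi t \<partial>lborel) \<le> (\<integral>t. indicator {x..<y} t * (1 / sqrt (2*pi)) \<partial>lborel)"
    by (rule Bochner_Integration.integral_mono[OF ind_phi_int ind_const_int]) (auto simp: indicator_def phi_le)
  also have "\<dots> = (y - x) / sqrt (2*pi)" using assms by simp
  finally show ?thesis .
qed

lemma seg_lower: assumes "x \<le> y" "x\<^sup>2 \<le> m" "y\<^sup>2 \<le> m"
  shows "(y - x) * (exp (-m/2) / sqrt (2*pi)) \<le> (\<integral>t. indicator {x..<y} t * phi t \<partial>lborel)"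
proof -
  have "(y - x) * (exp (-m/2) / sqrt (2*pi)) = (\<integral>t. indicator {x..<y} t * (exp (-m/2) / sqrt (2*pi)) \<partial>lborel)"
    using assms by simp
  also have "\<dots> \<le> (\<integral>t. indicator {x..<y} t * phi t \<partial>lborel)"
  proof (rule Bochner_Integration.integral_mono[OF ind_const_int ind_phi_int])
    fix t show "indicator {x..<y} t * (exp (-m/2) / sqrt (2*pi)) \<le> indicator {x..<y} t * phi t"
    proof (cases "t \<in> {x..<y}")
      case True
      have "t\<^sup>2 \<le> m"
      proof (cases "t \<ge> 0")
        case c: True
        then have "t\<^sup>2 \<le> y\<^sup>2" using True by (intro power_mono) auto
        then show ?thesis using assms by simp
      next
        case c: False
        then have "(-t)\<^sup>2 \<le> (-x)\<^sup>2" using True by (intro power_mono) auto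
        then show ?thesis using assms by simp
      qed
      then show ?thesis using True phi_lower by simp
    qed simp
  qed simp
  finally show ?thesis .
qed

lemma seg_nonneg: "0 \<le> (\<integral>t. indicator {x..<y} t * phi t \<partial>lborel)"
  by (intro Bochner_Integration.integral_nonneg mult_nonneg_nonneg) (auto simp: less_imp_le[OF phi_pos])



lemma Q_nonneg: "0 \<le> Q x"
  unfolding Q_eq by (intro Bochner_Integration.integral_nonneg mult_nonneg_nonneg) (auto simp: less_imp_le[OF phi_pos])

lemma P_nonneg: "0 \<le> P x"
  unfolding P_def by (intro Bochner_Integration.integral_nonneg mult_nonneg_nonneg) (auto simp: less_imp_le[OF phi_pos])

lemma Q_antimono: "x \<le> y \<Longrightarrow> Q y \<le> Q x"
  using Q_split[of x y] seg_nonneg[of x y] by simp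

lemma P_mono: "x \<le> y \<Longrightarrow> P x \<le> P y"
  using P_split[of x y] seg_nonneg[of x y] by simp

lemma P_meas[measurable]: "P \<in> borel_measurable borel"
  by (rule borel_measurable_mono) (simp add: mono_def P_mono)

lemma Q_alt: "Q = (\<lambda>x. 1 - P x)"
  using Q_P by (auto simp: fun_eq_iff algebra_simps)

lemma Q_meas[measurable]: "Q \<in> borel_measurable borel"
  unfolding Q_alt by measurable

lemma phi_even: "phi (- t) = phi t"
  by (simp add: phi_def)

lemma Q0: "Q 0 = 1/2"
proof -
  have "P 0 = \<bar>-1\<bar> *\<^sub>R (\<integral>t. indicator {..<0} (0 + (-1) * t) * phi (0 + (-1) * t) \<partial>lborel)"
    unfolding P_def by (rule lborel_integral_real_affine) simp
  also have "\<dots> = (\<integral>t. indicator {0<..} t * phi t \<partial>lborel)"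
    by (simp, intro Bochner_Integration.integral_cong) (auto simp: indicator_def phi_even)
  also have "\<dots> = Q 0" unfolding Q_eq
  proof (rule integral_cong_AE)
    show "AE t in lborel. indicator {0<..} t * phi t = indicator {0..} t * phi t"
      using AE_lborel_singleton[of 0] by eventually_elim (auto simp: indicator_def)
  qed measurable
  finally show ?thesis using Q_P[of 0] by simp
qed

lemma Q_near: "\<bar>Q x - 1/2\<bar> \<le> \<bar>x\<bar> / sqrt (2*pi)"
proof (cases "x \<ge> 0")
  case True
  then show ?thesis using Q_split[of 0 x] seg_nonneg[of 0 x] seg_upper[of 0 x] Q0 by simp
next
  case False
  then show ?thesis using Q_split[of x 0] seg_nonneg[of x 0] seg_upper[of x 0] Q0 by simp
qed

lemma Q_lower: assumes "0 \<le> x" shows "exp (-((x+1)\<^sup>2)/2) / sqrt (2*pi) \<le> Q x"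
proof -
  have "x\<^sup>2 \<le> (x+1)\<^sup>2" using assms by (intro power_mono) auto
  then have "(x + 1 - x) * (exp (-((x+1)\<^sup>2)/2) / sqrt (2*pi)) \<le> (\<integral>t. indicator {x..<x+1} t * phi t \<partial>lborel)"
    by (intro seg_lower) auto
  then show ?thesis using Q_split[of x "x+1"] Q_nonneg[of "x+1"] by simp
qed

lemma P_lower: assumes "x \<le> 0" shows "exp (-((x-1)\<^sup>2)/2) / sqrt (2*pi) \<le> P x"
proof -
  have "(-x)\<^sup>2 \<le> (-(x-1))\<^sup>2" using assms by (intro power_mono) auto
  then have "x\<^sup>2 \<le> (x-1)\<^sup>2" by (simp add: power2_commute)
  then have "(x - (x - 1)) * (exp (-((x-1)\<^sup>2)/2) / sqrt (2*pi)) \<le> (\<integral>t. indicator {x-1..<x} t * phi t \<partial>lborel)"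
    by (intro seg_lower) auto
  then show ?thesis using P_split[of "x-1" x] P_nonneg[of "x-1"] by simp
qed

lemma Q_pos: "0 < Q x"
proof (cases "x \<ge> 0")
  case True
  have "0 < exp (-((x+1)\<^sup>2)/2) / sqrt (2*pi)" by simp
  then show ?thesis using Q_lower[OF True] by linarith
next
  case False
  then show ?thesis using Q_antimono[of x 0] Q0 by simp
qed

lemma P_pos: "0 < P x"
proof (cases "x \<le> 0")
  case True
  have "0 < exp (-((x-1)\<^sup>2)/2) / sqrt (2*pi)" by simp
  then show ?thesis using P_lower[OF True] by linarith
next
  case False
  then show ?thesis using Q_antimono[of 0 x] Q0 Q_P[of x] by simp
qed

lemma QP_pos: "0 < Q x * (1 - Q x)"
  using Q_pos[of x] P_pos[of x] Q_P[of x] by (simp add: algebra_simps)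

lemma QP_quarter: "Q x * (1 - Q x) = 1/4 - (Q x - 1/2)\<^sup>2"
  by (simp add: power2_eq_square algebra_simps)



definition K :: real where "K = 2 * exp (3/2) / sqrt (2*pi)"

lemma sq2pi: "(sqrt (2*pi))\<^sup>2 = 2*pi" by simp

lemma xi_eq: "xi s = exp (- s\<^sup>2) / (2*pi) / (Q s * (1 - Q s))"
  by (simp add: xi_def phi_sq)

lemma xi_pos: "0 < xi s"
  unfolding xi_eq using QP_pos[of s] by simp

lemma xi_meas[measurable]: "xi \<in> borel_measurable borel"
  unfolding xi_def[abs_def] by measurable

lemma xi_upper: "xi s \<le> K * exp (- s\<^sup>2 / 4)"
proof -
  define c where "c = sqrt (2*pi)"
  have c: "c > 0" "c\<^sup>2 = 2*pi" unfolding c_def by auto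
  define a where "a = exp (- s\<^sup>2) / (2*pi)"
  have a: "a \<ge> 0" unfolding a_def by simp
  define m where "m = (if s \<ge> 0 then (s+1)\<^sup>2 else (s-1)\<^sup>2)"
  define L where "L = exp (- m / 2) / (2 * c)"
  have L: "L > 0" unfolding L_def using c by simp
  have D: "L \<le> Q s * (1 - Q s)"
  proof (cases "s \<ge> 0")
    case True
    have "1/2 \<le> 1 - Q s" using Q_antimono[OF True] Q0 by simp
    moreover have "exp (-m/2) / c \<le> Q s" using Q_lower[OF True] True unfolding m_def c_def by simp
    ultimately have "exp (-m/2) / c * (1/2) \<le> Q s * (1 - Q s)"
      by (intro mult_mono) (auto simp: Q_nonneg)
    then show ?thesis unfolding L_def by simp
  next
    case False
    have "1/2 \<le> Q s" using Q_antimono[of s 0] False Q0 by simp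
    moreover have "exp (-m/2) / c \<le> 1 - Q s" using P_lower[of s] Q_P[of s] False unfolding m_def c_def
      by (simp add: algebra_simps)
    ultimately have "(1/2) * (exp (-m/2) / c) \<le> Q s * (1 - Q s)"
      using c by (intro mult_mono) (auto simp: Q_nonneg)
    then show ?thesis unfolding L_def by simp
  qed
  have "xi s = a / (Q s * (1 - Q s))" unfolding xi_eq a_def ..
  also have "\<dots> \<le> a / L" using D L a by (intro divide_left_mono) auto
  also have "a / L = 2 / c * (exp (- s\<^sup>2) / exp (- m / 2))"
    unfolding a_def L_def using c by (simp add: field_simps power2_eq_square)
  also have "exp (- s\<^sup>2) / exp (- m / 2) = exp (- s\<^sup>2 + m/2)"
    by (simp add: exp_diff[symmetric])
  also have "\<dots> \<le> exp (3/2 - s\<^sup>2/4)"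
  proof -
    have "- s\<^sup>2 + m/2 \<le> 3/2 - s\<^sup>2/4"
    proof (cases "s \<ge> 0")
      case True
      have "0 \<le> (s/2 - 1)\<^sup>2" by simp
      then show ?thesis using True unfolding m_def by (simp add: power2_eq_square algebra_simps)
    next
      case False
      have "0 \<le> (s/2 + 1)\<^sup>2" by simp
      then show ?thesis using False unfolding m_def by (simp add: power2_eq_square algebra_simps)
    qed
    then show ?thesis by simp
  qed
  also have "exp (3/2 - s\<^sup>2/4) = exp (3/2) * exp (- s\<^sup>2/4)"
    by (simp add: exp_add[symmetric])
  finally show ?thesis
    using c unfolding K_def c_def by (simp add: mult_left_mono field_simps)
qed

lemma K_pos: "0 < K" unfolding K_def by simp

lemma xi_bound: "xi s \<le> K"
proof -
  have "exp (- s\<^sup>2 / 4) \<le> 1" by simp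
  then have "K * exp (- s\<^sup>2 / 4) \<le> K" using K_pos by (simp add: mult_left_le)
  then show ?thesis using xi_upper[of s] by linarith
qed

lemma xi_moment_int: "integrable lborel (\<lambda>u. xi u * u ^ k)"
proof (rule Bochner_Integration.integrable_bound)
  let ?f = "\<lambda>u. (K * sqrt (4*pi)) * (normal_density 0 (sqrt 2) u * \<bar>u - 0\<bar> ^ k)"
  show "integrable lborel ?f"
    by (intro integrable_mult_right integrable_normal_moment_abs) simp
  show "(\<lambda>u. xi u * u ^ k) \<in> borel_measurable lborel" by measurable
  show "AE x in lborel. norm (xi x * x ^ k) \<le> norm (?f x)"
  proof (intro AE_I2)
    fix x :: real
    have nd: "normal_density 0 (sqrt 2) x = exp (- x\<^sup>2 / 4) / sqrt (4*pi)"
      by (simp add: normal_density_def)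
    have "norm (xi x * x ^ k) = xi x * \<bar>x\<bar> ^ k"
      using xi_pos[of x] by (simp add: abs_mult power_abs)
    also have "\<dots> \<le> K * exp (- x\<^sup>2 / 4) * \<bar>x\<bar> ^ k"
      by (intro mult_right_mono xi_upper) auto
    also have "\<dots> = norm (?f x)" using K_pos by (simp add: nd abs_mult)
    finally show "norm (xi x * x ^ k) \<le> norm (?f x)" .
  qed
qed

lemma xi_near: "\<bar>xi s - 2/pi\<bar> \<le> (10 + 2*K) * s\<^sup>2"
proof (cases "s\<^sup>2 \<le> 1/2")
  case True
  define D where "D = Q s * (1 - Q s)"
  have pi3: "3 < pi" using pi_gt3 .
  have qs: "(Q s - 1/2)\<^sup>2 \<le> s\<^sup>2 / (2*pi)"
  proof -
    have "(Q s - 1/2)\<^sup>2 = \<bar>Q s - 1/2\<bar>\<^sup>2" by simp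
    also have "\<dots> \<le> (\<bar>s\<bar> / sqrt (2*pi))\<^sup>2" using Q_near[of s] by (intro power_mono) auto
    also have "\<dots> = s\<^sup>2 / (2*pi)" by (simp add: power_divide)
    finally show ?thesis .
  qed
  have "s\<^sup>2 / (2*pi) \<le> 1/12" using True pi3 by (simp add: field_simps)
  then have D8: "1/8 \<le> D" unfolding D_def using QP_quarter[of s] qs by linarith
  have e1: "\<bar>exp (- s\<^sup>2) - 1\<bar> \<le> s\<^sup>2"
    using exp_ge_add_one_self[of "- s\<^sup>2"] by (simp add: abs_if)
  have num: "xi s - 2/pi = ((exp (- s\<^sup>2) - 1) / (2*pi) + (2/pi) * (Q s - 1/2)\<^sup>2) / D"
    using D8 unfolding xi_eq D_def[symmetric] QP_quarter[of s, folded D_def]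
    by (simp add: field_simps)
  have "\<bar>(exp (- s\<^sup>2) - 1) / (2*pi)\<bar> \<le> s\<^sup>2 / (2*pi)"
    using e1 by (simp add: divide_right_mono)
  moreover have "(2/pi) * (Q s - 1/2)\<^sup>2 \<le> (2/pi) * (s\<^sup>2 / (2*pi))"
    by (rule mult_left_mono[OF qs]) simp
  then have "\<bar>(2/pi) * (Q s - 1/2)\<^sup>2\<bar> \<le> (2/pi) * (s\<^sup>2 / (2*pi))" by simp
  ultimately have "\<bar>(exp (- s\<^sup>2) - 1) / (2*pi) + (2/pi) * (Q s - 1/2)\<^sup>2\<bar> \<le> s\<^sup>2 / (2*pi) + (2/pi) * (s\<^sup>2 / (2*pi))"
    by linarith
  also have "\<dots> \<le> s\<^sup>2"
  proof -
    have "pi*(pi*2) \<ge> pi*6" using pi3 by (intro mult_left_mono) auto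
    then have h: "pi + 2 \<le> pi*(pi*2)" using pi3 by linarith
    have "1/(2*pi) + (2/pi) * (1/(2*pi)) \<le> 1" using pi3 by (simp add: field_simps h)
    then have "s\<^sup>2 * (1/(2*pi) + (2/pi) * (1/(2*pi))) \<le> s\<^sup>2 * 1" by (intro mult_left_mono) auto
    then show ?thesis by (simp add: algebra_simps)
  qed
  finally have nb: "\<bar>(exp (- s\<^sup>2) - 1) / (2*pi) + (2/pi) * (Q s - 1/2)\<^sup>2\<bar> \<le> s\<^sup>2" .
  have "\<bar>xi s - 2/pi\<bar> = \<bar>(exp (- s\<^sup>2) - 1) / (2*pi) + (2/pi) * (Q s - 1/2)\<^sup>2\<bar> / D"
    using D8 unfolding num by simp
  also have "\<dots> \<le> s\<^sup>2 / (1/8)" using D8 nb by (intro frac_le) auto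
  also have "\<dots> = 8 * s\<^sup>2" by simp
  also have "\<dots> \<le> (10 + 2*K) * s\<^sup>2" using K_pos by (intro mult_right_mono) auto
  finally show ?thesis .
next
  case False
  have pi3: "3 < pi" using pi_gt3 .
  have p1: "2/pi \<le> 1" "0 \<le> 2/pi" using pi3 by auto
  have "\<bar>xi s - 2/pi\<bar> \<le> K + 1" using xi_bound[of s] xi_pos[of s] p1 unfolding abs_le_iff by linarith
  also have "\<dots> \<le> (10 + 2*K) * s\<^sup>2"
  proof -
    have "(K + 1) * 1 \<le> (2*K + 2) * (1/2)" by simp
    also have "\<dots> \<le> (10 + 2*K) * s\<^sup>2" using False K_pos by (intro mult_mono) auto
    finally show ?thesis by simp
  qed
  finally show ?thesis .
qed



lemma zeta_int: "integrable lborel (\<lambda>s. s ^ k * xi (r * s) * phi s)"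
proof (rule Bochner_Integration.integrable_bound)
  show "integrable lborel (\<lambda>s. K * (std_normal_density s * \<bar>s\<bar> ^ k))"
    by (intro integrable_mult_right integrable_std_normal_moment_abs)
  show "(\<lambda>s. s ^ k * xi (r * s) * phi s) \<in> borel_measurable lborel" by measurable
  show "AE s in lborel. norm (s ^ k * xi (r * s) * phi s) \<le> norm (K * (std_normal_density s * \<bar>s\<bar> ^ k))"
  proof (intro AE_I2)
    fix s :: real
    have "norm (s ^ k * xi (r * s) * phi s) = \<bar>s\<bar> ^ k * xi (r * s) * phi s"
      using xi_pos[of "r * s"] phi_pos[of s] by (simp add: abs_mult power_abs)
    also have "\<dots> \<le> \<bar>s\<bar> ^ k * K * phi s"
      using xi_bound[of "r * s"] phi_pos[of s] by (intro mult_right_mono mult_left_mono) auto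
    also have "\<dots> = norm (K * (std_normal_density s * \<bar>s\<bar> ^ k))"
      using K_pos phi_pos[of s] by (simp add: phi_std abs_mult)
    finally show "norm (s ^ k * xi (r * s) * phi s) \<le> norm (K * (std_normal_density s * \<bar>s\<bar> ^ k))" .
  qed
qed

lemma phi_mom_int: "integrable lborel (\<lambda>s. s ^ k * phi s)"
  using integrable_std_normal_moment[of k] by (simp add: phi_std mult.commute)

lemma small_r:
  fixes j :: nat
  assumes k: "k = 2 * j" and m: "(\<integral>s. s ^ k * phi s \<partial>lborel) = 1"
  shows "(\<lambda>r. zeta k r - 2 / pi) \<in> O[at_right 0](\<lambda>r. r^2)"
proof -
  define C where "C = 10 + 2 * K"
  define M where "M = (\<integral>s. s ^ (k+2) * phi s \<partial>lborel)"
  have bnd: "\<bar>zeta k r - 2/pi\<bar> \<le> (C * M) * \<bar>r^2\<bar>" for r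
  proof -
    have "zeta k r - 2/pi = (\<integral>s. s ^ k * xi (r * s) * phi s \<partial>lborel) - (2/pi) * (\<integral>s. s ^ k * phi s \<partial>lborel)"
      unfolding zeta_def m by simp
    also have "\<dots> = (\<integral>s. s ^ k * xi (r * s) * phi s - (2/pi) * (s ^ k * phi s) \<partial>lborel)"
      using zeta_int[of k r] phi_mom_int[of k] by (simp add: Bochner_Integration.integral_diff)
    finally have eq: "zeta k r - 2/pi = (\<integral>s. s ^ k * xi (r * s) * phi s - (2/pi) * (s ^ k * phi s) \<partial>lborel)" .
    have "\<bar>\<integral>s. s ^ k * xi (r * s) * phi s - (2/pi) * (s ^ k * phi s) \<partial>lborel\<bar> \<le> (\<integral>s. (C * r\<^sup>2) * (s ^ (k+2) * phi s) \<partial>lborel)"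
    proof (rule integral_abs_bound_integral)
      show "integrable lborel (\<lambda>s. s ^ k * xi (r * s) * phi s - 2 / pi * (s ^ k * phi s))"
        using zeta_int[of k r] phi_mom_int[of k] by auto
      show "integrable lborel (\<lambda>s. C * r\<^sup>2 * (s ^ (k + 2) * phi s))"
        using phi_mom_int[of "k+2"] by auto
      fix s :: real
      have ev: "s ^ k = \<bar>s\<bar> ^ k" using k by (simp add: power_even_abs)
      have "s ^ k * xi (r * s) * phi s - 2 / pi * (s ^ k * phi s) = (s^k * phi s) * (xi (r * s) - 2/pi)"
        by (simp add: algebra_simps)
      then have "\<bar>s ^ k * xi (r * s) * phi s - 2 / pi * (s ^ k * phi s)\<bar> = \<bar>s\<bar>^k * phi s * \<bar>xi (r * s) - 2/pi\<bar>"
        using phi_pos[of s] by (simp add: abs_mult power_abs)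
      also have "\<dots> \<le> \<bar>s\<bar>^k * phi s * (C * (r * s)\<^sup>2)"
        using xi_near[of "r * s"] phi_pos[of s] unfolding C_def by (intro mult_left_mono) auto
      also have "\<dots> = C * r\<^sup>2 * (s ^ (k + 2) * phi s)"
        using ev by (simp add: power_add power_mult_distrib algebra_simps power2_eq_square)
      finally show "\<bar>s ^ k * xi (r * s) * phi s - 2 / pi * (s ^ k * phi s)\<bar> \<le> C * r\<^sup>2 * (s ^ (k + 2) * phi s)" .
    qed
    also have "\<dots> = (C * M) * \<bar>r^2\<bar>" unfolding M_def by simp
    finally show ?thesis using eq by simp
  qed
  show ?thesis
    by (rule bigoI[where c = "C * M"]) (use bnd in simp)
qed



lemma xi_lower: "exp (- s\<^sup>2) / (2*pi) \<le> xi s"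
proof -
  have D: "0 < Q s * (1 - Q s)" "Q s * (1 - Q s) \<le> 1"
    using QP_pos[of s] QP_quarter[of s] zero_le_power2[of "Q s - 1/2"] by linarith+
  have "exp (- s\<^sup>2) / (2*pi) / 1 \<le> exp (- s\<^sup>2) / (2*pi) / (Q s * (1 - Q s))"
    using D by (intro divide_left_mono) auto
  then show ?thesis unfolding xi_eq by simp
qed

lemma I_pos:
  assumes k: "k = 2 * j"
  shows "0 < (\<integral>u. xi u * u ^ k \<partial>lborel)"
proof -
  have "0 < (2 - 1) * (exp (-4) / (2*pi))" by simp
  also have "\<dots> = (\<integral>u. indicator {1..<2::real} u * (exp (-4) / (2*pi)) \<partial>lborel)" by simp
  also have "\<dots> \<le> (\<integral>u. xi u * u ^ k \<partial>lborel)"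
  proof (rule Bochner_Integration.integral_mono[OF ind_const_int xi_moment_int])
    fix u :: real
    show "indicator {1..<2} u * (exp (-4) / (2*pi)) \<le> xi u * u ^ k"
    proof (cases "u \<in> {1..<2}")
      case True
      have "u\<^sup>2 \<le> 2\<^sup>2" using True by (intro power_mono) auto
      then have "exp (-4) / (2*pi) \<le> exp (- u\<^sup>2) / (2*pi)"
        by (intro divide_right_mono) auto
      also have "\<dots> \<le> xi u" by (rule xi_lower)
      also have "\<dots> \<le> xi u * u ^ k"
      proof -
        have "1 \<le> u ^ k" using True by (intro one_le_power) auto
        then have "xi u * 1 \<le> xi u * u ^ k" using xi_pos[of u] by (intro mult_left_mono) auto
        then show ?thesis by simp
      qed
      finally show ?thesis using True by simp
    next
      case False
      have "0 \<le> xi u * u ^ k" using xi_pos[of u] k by (intro mult_nonneg_nonneg) (auto simp: power_mult)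
      then show ?thesis using False by simp
    qed
  qed
  finally show ?thesis .
qed



lemma large_r:
  fixes j :: nat
  assumes k: "k = 2 * j"
  shows "\<exists>h. h \<in> O[at_top](\<lambda>r. 1 / r^2) \<and>
    (\<forall>\<^sub>F r in at_top. zeta k r = (1 / sqrt (2*pi) * (\<integral>u. xi u * u ^ k \<partial>lborel)) / r^(k+1) * (1 + h r))"
proof -
  define I where "I = (\<integral>u. xi u * u ^ k \<partial>lborel)"
  define J where "J = (\<integral>u. xi u * u ^ (k+2) \<partial>lborel)"
  define E where "E r = (\<integral>u. xi u * u ^ k * exp (- (u/r)\<^sup>2 / 2) \<partial>lborel)" for r
  define h where "h r = E r / I - 1" for r
  have Ipos: "0 < I" unfolding I_def using I_pos[OF k] .
  have ev: "u ^ k = \<bar>u\<bar> ^ k" for u :: real using k by (simp add: power_even_abs)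
  have Eint: "integrable lborel (\<lambda>u. xi u * u ^ k * exp (- (u/r)\<^sup>2 / 2))" for r
  proof (rule Bochner_Integration.integrable_bound[OF xi_moment_int[of k]])
    show "(\<lambda>u. xi u * u ^ k * exp (- (u/r)\<^sup>2 / 2)) \<in> borel_measurable lborel" by measurable
    show "AE x in lborel. norm (xi x * x ^ k * exp (- (x / r)\<^sup>2 / 2)) \<le> norm (xi x * x ^ k)"
    proof (intro AE_I2)
      fix x :: real
      have "exp (- (x / r)\<^sup>2 / 2) \<le> 1" by simp
      then have "norm (xi x * x ^ k) * exp (- (x / r)\<^sup>2 / 2) \<le> norm (xi x * x ^ k) * 1"
        by (intro mult_left_mono) auto
      then show "norm (xi x * x ^ k * exp (- (x / r)\<^sup>2 / 2)) \<le> norm (xi x * x ^ k)"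
        by (simp add: abs_mult)
    qed
  qed
  have zeta_eq: "zeta k r = 1 / sqrt (2*pi) * E r / r^(k+1)" if r: "r > 0" for r
  proof -
    have "zeta k r = \<bar>1/r\<bar> *\<^sub>R (\<integral>u. (0 + (1/r) * u) ^ k * xi (r * (0 + (1/r) * u)) * phi (0 + (1/r) * u) \<partial>lborel)"
      unfolding zeta_def by (rule lborel_integral_real_affine) (use r in simp)
    also have "(\<lambda>u. (0 + (1/r) * u) ^ k * xi (r * (0 + (1/r) * u)) * phi (0 + (1/r) * u)) = (\<lambda>u. (1 / r^k * (1 / sqrt (2*pi))) * (xi u * u ^ k * exp (- (u/r)\<^sup>2 / 2)))"
      by (rule ext) (use r in \<open>simp add: phi_def power_divide field_simps\<close>)
    also have "\<bar>1/r\<bar> *\<^sub>R (\<integral>u. (1 / r^k * (1 / sqrt (2*pi))) * (xi u * u ^ k * exp (- (u/r)\<^sup>2 / 2)) \<partial>lborel) = (1/r) * (\<integral>u. (1 / r^k * (1 / sqrt (2*pi))) * (xi u * u ^ k * exp (- (u/r)\<^sup>2 / 2)) \<partial>lborel)"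
      using r by simp
    also have "\<dots> = 1 / sqrt (2*pi) * E r / r^(k+1)"
      unfolding E_def by (simp add: field_simps)
    finally show ?thesis .
  qed
  have Ebound: "\<bar>E r - I\<bar> \<le> J / 2 * (1 / r\<^sup>2)" if r: "r > 0" for r
  proof -
    have "E r - I = (\<integral>u. xi u * u ^ k * exp (- (u/r)\<^sup>2 / 2) - xi u * u ^ k \<partial>lborel)"
      unfolding E_def I_def using Eint[of r] xi_moment_int[of k] by (simp add: Bochner_Integration.integral_diff)
    also have "\<bar>\<dots>\<bar> \<le> (\<integral>u. (1 / (2 * r\<^sup>2)) * (xi u * u ^ (k+2)) \<partial>lborel)"
    proof (rule integral_abs_bound_integral)
      show "integrable lborel (\<lambda>u. xi u * u ^ k * exp (- (u/r)\<^sup>2 / 2) - xi u * u ^ k)"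
        using Eint[of r] xi_moment_int[of k] by auto
      show "integrable lborel (\<lambda>u. (1 / (2 * r\<^sup>2)) * (xi u * u ^ (k+2)))"
        using xi_moment_int[of "k+2"] by auto
      fix u :: real
      have e1: "\<bar>exp (- (u/r)\<^sup>2 / 2) - 1\<bar> \<le> (u/r)\<^sup>2 / 2"
        using exp_ge_add_one_self[of "- (u/r)\<^sup>2 / 2"] by (simp add: abs_if)
      have "\<bar>xi u * u ^ k * exp (- (u/r)\<^sup>2 / 2) - xi u * u ^ k\<bar> = (xi u * \<bar>u\<bar> ^ k) * \<bar>exp (- (u/r)\<^sup>2 / 2) - 1\<bar>"
      proof -
        have "xi u * u ^ k * exp (- (u/r)\<^sup>2 / 2) - xi u * u ^ k = (xi u * u ^ k) * (exp (- (u/r)\<^sup>2 / 2) - 1)"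
          by (simp add: algebra_simps)
        then show ?thesis using xi_pos[of u] by (simp add: abs_mult power_abs)
      qed
      also have "\<dots> \<le> (xi u * \<bar>u\<bar> ^ k) * ((u/r)\<^sup>2 / 2)"
        using e1 xi_pos[of u] by (intro mult_left_mono) auto
      also have "\<dots> = (1 / (2 * r\<^sup>2)) * (xi u * u ^ (k+2))"
        using r ev[of u] by (simp add: power_add power_divide field_simps power2_eq_square)
      finally show "\<bar>xi u * u ^ k * exp (- (u/r)\<^sup>2 / 2) - xi u * u ^ k\<bar> \<le> (1 / (2 * r\<^sup>2)) * (xi u * u ^ (k+2))" .
    qed
    also have "\<dots> = J / 2 * (1 / r\<^sup>2)" unfolding J_def by (simp add: field_simps)
    finally show ?thesis .
  qed
  have "h \<in> O[at_top](\<lambda>r. 1 / r^2)"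
  proof (rule bigoI[where c = "J / (2 * I)"])
    show "\<forall>\<^sub>F r in at_top. norm (h r) \<le> J / (2 * I) * norm (1 / r^2)"
      using eventually_gt_at_top[of 0]
    proof eventually_elim
      case (elim r)
      have "norm (h r) = \<bar>E r - I\<bar> / I" unfolding h_def using Ipos by (simp add: field_simps)
      also have "\<dots> \<le> (J / 2 * (1 / r\<^sup>2)) / I" using Ebound[OF elim] Ipos by (intro divide_right_mono) auto
      also have "\<dots> = J / (2 * I) * norm (1 / r^2)" by (simp add: field_simps)
      finally show ?case .
    qed
  qed
  moreover have "\<forall>\<^sub>F r in at_top. zeta k r = (1 / sqrt (2*pi) * I) / r^(k+1) * (1 + h r)"
    using eventually_gt_at_top[of 0]
  proof eventually_elim
    case (elim r)
    then show ?case unfolding zeta_eq[OF elim] h_def using Ipos by (simp add: field_simps)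
  qed
  ultimately show ?thesis unfolding I_def by blast
qed


theorem lemma6:
  shows "(\<lambda>r. zeta 0 r - 2 / pi) \<in> O[at_right 0](\<lambda>r. r^2) \<and>
         (\<lambda>r. zeta 2 r - 2 / pi) \<in> O[at_right 0](\<lambda>r. r^2) \<and>
         (\<exists>h. h \<in> O[at_top](\<lambda>r. 1 / r^2) \<and>
           (\<forall>\<^sub>F r in at_top. zeta 0 r = A0 / r * (1 + h r))) \<and>
         (\<exists>h. h \<in> O[at_top](\<lambda>r. 1 / r^2) \<and>
           (\<forall>\<^sub>F r in at_top. zeta 2 r = A2 / r^3 * (1 + h r)))"
proof (intro conjI)
  show "(\<lambda>r. zeta 0 r - 2 / pi) \<in> O[at_right 0](\<lambda>r. r^2)"
    by (rule small_r[where j=0]) (simp_all add: phi_int1)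
  have m2: "(\<integral>s. s ^ 2 * phi s \<partial>lborel) = 1"
    using integral_std_normal_moment_even[of 1] by (simp add: phi_std mult.commute)
  show "(\<lambda>r. zeta 2 r - 2 / pi) \<in> O[at_right 0](\<lambda>r. r^2)"
    by (rule small_r[where j=1]) (simp_all add: m2)
  show "\<exists>h. h \<in> O[at_top](\<lambda>r. 1 / r^2) \<and> (\<forall>\<^sub>F r in at_top. zeta 0 r = A0 / r * (1 + h r))"
    using large_r[of 0 0] by (simp add: A0_def)
  show "\<exists>h. h \<in> O[at_top](\<lambda>r. 1 / r^2) \<and> (\<forall>\<^sub>F r in at_top. zeta 2 r = A2 / r^3 * (1 + h r))"
    using large_r[of 2 1] by (simp add: A2_def)
qed

end
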